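(* For a Dyck path $D$ of length $2(n+1)$, let $(a_1,b_1),\dots,(a_k,b_k)$ be the peaks of $D$ of height at least $2$, listed from left to right, and set $p_i=(a_i+b_i-2)/2$, $r_i=b_i-1$. Define $\Phi(D)$ to be the word $R_1R_2\cdots R_k$ with $R_i=x_{p_i}x_{p_i-1}\cdots x_{p_i-r_i+1}$ (and $\Phi(D)=1$ if $k=0$). Then $\Phi$ is a bijection from the set of Dyck paths of length $2(n+1)$ to the set of nTL-monomials for $P_n$; moreover the decreasing runs of $\Phi(D)$ are exactly $R_1,\dots,R_k$.
   Context: Fix $n\ge 0$. The nil-Temperley-Lieb algebra $A_n$ of the path graph $P_n$ is the unital associative algebra generated by $x_1,\dots,x_n$ subject to the relations $x_i^2=0$; $x_ix_j=x_jx_i$ if $|i-j|>1$; $x_ix_{i+1}x_i=0$ and $x_{i+1}x_ix_{i+1}=0$ for $1\le i<n$. A word is a finite product of generators. Two words are equivalent if one can be obtained from the other by repeatedly swapping adjacent letters $x_ix_j\to x_jx_i$ with $|i-j|>1$. A word is reducible if it equals $0$ in $A_n$. Words of the same length are compared lexicographically by index sequences. An nTL-monomial is a word that is not reducible and lexicographically smallest among all words equivalent to it. A decreasing run is a maximal block of consecutive letters with strictly decreasing indices. A Dyck path of length $2m$ is a lattice path from $(0,0)$ to $(2m,0)$ with steps $(1,1)$ (up) and $(1,-1)$ (down) that never goes below the $x$-axis. A peak of a Dyck path is a point $(a,b)$ on it reached by an up step and followed by a down step; $b$ is its height. *)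

theory Defs
  imports Main "HOL-Library.Poly_Mapping"
begin

text \<open>A word is a list of generator indices; the word [i1,...,im] stands for x_i1 ... x_im.
  Words over the generators of A_n have all letters in {1..n}.\<close>

definition is_word :: "nat \<Rightarrow> nat list \<Rightarrow> bool" where
  "is_word n w \<longleftrightarrow> set w \<subseteq> {1..n}"

definition zero_rel :: "nat \<Rightarrow> nat list \<Rightarrow> bool" where
  "zero_rel n m \<longleftrightarrow>
     (\<exists>i. 1 \<le> i \<and> i \<le> n \<and> m = [i, i]) \<or>
     (\<exists>i. 1 \<le> i \<and> i < n \<and> (m = [i, Suc i, i] \<or> m = [Suc i, i, Suc i]))"

definition comm_rel :: "nat \<Rightarrow> nat list \<Rightarrow> nat list \<Rightarrow> bool" where
  "comm_rel n a b \<longleftrightarrow>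
     (\<exists>i j. 1 \<le> i \<and> i \<le> n \<and> 1 \<le> j \<and> j \<le> n \<and> (i + 1 < j \<or> j + 1 < i)
            \<and> a = [i, j] \<and> b = [j, i])"

text \<open>The free associative algebra over a field 'k on x_1..x_n is modelled by finitely
  supported functions from words to 'k. The two-sided ideal generated by the defining
  relations is the set of finite linear combinations of u * r * v with u, v words and
  r a defining relation.\<close>
inductive in_nTL_ideal :: "nat \<Rightarrow> (nat list \<Rightarrow>\<^sub>0 'k::field) \<Rightarrow> bool" for n where
  zero: "in_nTL_ideal n 0"
| mono: "in_nTL_ideal n f \<Longrightarrow> zero_rel n m \<Longrightarrow> is_word n u \<Longrightarrow> is_word n v \<Longrightarrow>
           in_nTL_ideal n (f + Poly_Mapping.single (u @ m @ v) c)"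
| comm: "in_nTL_ideal n f \<Longrightarrow> comm_rel n a b \<Longrightarrow> is_word n u \<Longrightarrow> is_word n v \<Longrightarrow>
           in_nTL_ideal n (f + (Poly_Mapping.single (u @ a @ v) c - Poly_Mapping.single (u @ b @ v) c))"

text \<open>A word is reducible if it equals 0 in A_n (over the field 'k).\<close>
definition reducible :: "'k::field itself \<Rightarrow> nat \<Rightarrow> nat list \<Rightarrow> bool" where
  "reducible K n w \<longleftrightarrow> in_nTL_ideal n (Poly_Mapping.single w (1::'k))"

definition swap_step :: "nat list \<Rightarrow> nat list \<Rightarrow> bool" where
  "swap_step w w' \<longleftrightarrow>
     (\<exists>u v i j. (i + 1 < j \<or> j + 1 < i) \<and> w = u @ [i, j] @ v \<and> w' = u @ [j, i] @ v)"

definition word_equiv :: "nat list \<Rightarrow> nat list \<Rightarrow> bool" where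
  "word_equiv w w' \<longleftrightarrow> swap_step\<^sup>*\<^sup>* w w'"

text \<open>Lexicographic comparison of index sequences (used only for words of equal length).\<close>
definition lex_less :: "nat list \<Rightarrow> nat list \<Rightarrow> bool" where
  "lex_less u w \<longleftrightarrow> (u, w) \<in> lexord {(a, b). a < b}"

definition nTL_monomial :: "'k::field itself \<Rightarrow> nat \<Rightarrow> nat list \<Rightarrow> bool" where
  "nTL_monomial K n w \<longleftrightarrow>
     is_word n w \<and> \<not> reducible K n w \<and>
     (\<forall>w'. word_equiv w w' \<longrightarrow> w' = w \<or> lex_less w w')"

definition decreasing_runs :: "nat list \<Rightarrow> nat list list \<Rightarrow> bool" where
  "decreasing_runs w rs \<longleftrightarrow>
     concat rs = w \<and>
     (\<forall>r\<in>set rs. r \<noteq> [] \<and> sorted_wrt (>) r) \<and>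
     (\<forall>i. Suc i < length rs \<longrightarrow> \<not> (last (rs ! i) > hd (rs ! Suc i)))"

text \<open>A lattice path is a list of steps, True = up step (1,1), False = down step (1,-1).
  height D j is the height of the point after the first j steps.\<close>
definition height :: "bool list \<Rightarrow> nat \<Rightarrow> int" where
  "height D j = int (length (filter id (take j D))) - int (length (filter Not (take j D)))"

definition dyck_path :: "nat \<Rightarrow> bool list \<Rightarrow> bool" where
  "dyck_path m D \<longleftrightarrow> length D = 2 * m \<and> height D (2 * m) = 0 \<and>
     (\<forall>j \<le> 2 * m. height D j \<ge> 0)"

definition is_peak :: "bool list \<Rightarrow> nat \<Rightarrow> bool" where
  "is_peak D j \<longleftrightarrow> 1 \<le> j \<and> j < length D \<and> D ! (j - 1) \<and> \<not> D ! j"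

definition high_peaks :: "bool list \<Rightarrow> nat list" where
  "high_peaks D = filter (\<lambda>j. is_peak D j \<and> height D j \<ge> 2) [0..<length D]"

definition peak_run :: "bool list \<Rightarrow> nat \<Rightarrow> nat list" where
  "peak_run D a =
     (let b = nat (height D a); p = (a + b - 2) div 2; r = b - 1 in map (\<lambda>t. p - t) [0..<r])"

definition Phi_runs :: "bool list \<Rightarrow> nat list list" where
  "Phi_runs D = map (peak_run D) (high_peaks D)"

definition Phi :: "bool list \<Rightarrow> nat list" where
  "Phi D = concat (Phi_runs D)"

end

theory Submission
  imports Defs
begin


definition ups :: "bool list \<Rightarrow> nat" where "ups xs = length (filter id xs)"
definition downs :: "bool list \<Rightarrow> nat" where "downs xs = length (filter Not xs)"

lemma ups_simps[simp]: "ups [] = 0" "ups (x#xs) = (if x then Suc (ups xs) else ups xs)"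
  "ups (xs @ ys) = ups xs + ups ys"
  by (auto simp: ups_def)
lemma downs_simps[simp]: "downs [] = 0" "downs (x#xs) = (if x then downs xs else Suc (downs xs))"
  "downs (xs @ ys) = downs xs + downs ys"
  by (auto simp: downs_def)
lemma ups_downs_len: "ups xs + downs xs = length xs"
  by (induction xs) auto

primrec pk :: "nat \<Rightarrow> nat \<Rightarrow> bool list \<Rightarrow> (nat \<times> nat) list" where
  "pk u d [] = []"
| "pk u d (x # r) = (if x then (if r \<noteq> [] \<and> \<not> hd r \<and> d + 2 \<le> Suc u then [(Suc u, d)] else []) @ pk (Suc u) d r
                     else pk u (Suc d) r)"

primrec nnr :: "nat \<Rightarrow> nat \<Rightarrow> bool list \<Rightarrow> bool" where
  "nnr u d [] = (d \<le> u)"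
| "nnr u d (x # r) = (d \<le> u \<and> (if x then nnr (Suc u) d r else nnr u (Suc d) r))"

definition runpq :: "nat \<times> nat \<Rightarrow> nat list" where
  "runpq p = rev [Suc (snd p)..<fst p]"

definition W :: "(nat \<times> nat) list \<Rightarrow> nat list" where
  "W S = concat (map runpq S)"

lemma nnr_le: "nnr u d r \<Longrightarrow> d \<le> u"
  by (cases r) auto

lemma all_le_Suc: "(\<forall>j\<le>Suc n. P j) \<longleftrightarrow> P 0 \<and> (\<forall>j\<le>n. P (Suc j))"
  by (metis Suc_le_mono le0 not0_implies_Suc)

lemma nnr_take: "nnr u d D \<longleftrightarrow> (\<forall>j\<le>length D. d + downs (take j D) \<le> u + ups (take j D))"
proof (induction D arbitrary: u d)
  case Nil then show ?case by simp
next
  case (Cons x r)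
  show ?case
    unfolding length_Cons all_le_Suc
    using Cons.IH by (auto simp: nnr_le)
qed

lemma filter_upt_Cons: "a < b \<Longrightarrow> filter P [a..<b] = (if P a then [a] else []) @ filter P [Suc a..<b]"
  by (simp add: upt_conv_Cons)

lemma peaks_pk:
  "map (\<lambda>j. (ups (take j (P @ D)), downs (take j (P @ D))))
     (filter (\<lambda>j. is_peak (P @ D) j \<and> height (P @ D) j \<ge> 2) [Suc (length P)..<length (P @ D)])
   = pk (ups P) (downs P) D"
proof (induction D arbitrary: P)
  case Nil then show ?case by simp
next
  case (Cons x r)
  have IH: "map (\<lambda>j. (ups (take j ((P @ [x]) @ r)), downs (take j ((P @ [x]) @ r))))
     (filter (\<lambda>j. is_peak ((P @ [x]) @ r) j \<and> height ((P @ [x]) @ r) j \<ge> 2) [Suc (length (P @ [x]))..<length ((P @ [x]) @ r)])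
   = pk (ups (P @ [x])) (downs (P @ [x])) r" by (rule Cons.IH)
  show ?case
  proof (cases "r = []")
    case True
    then show ?thesis by auto
  next
    case False
    have lt: "Suc (length P) < length (P @ x # r)" using False by (cases r) auto
    have pk1: "is_peak (P @ x # r) (Suc (length P)) \<longleftrightarrow> x \<and> \<not> hd r"
      using False by (cases r) (auto simp: is_peak_def nth_append)
    have tk: "take (Suc (length P)) (P @ x # r) = P @ [x]" by simp
    have ht: "height (P @ x # r) (Suc (length P)) = int (ups (P @ [x])) - int (downs (P @ [x]))"
      unfolding height_def tk by (simp add: ups_def downs_def)
    show ?thesis
      apply (subst filter_upt_Cons[OF lt])
      using IH pk1 ht False by (auto simp: tk)
  qed
qed

lemma map_minus_upt: "r \<le> Suc p \<Longrightarrow> map (\<lambda>t. p - t) [0..<r] = rev [Suc p - r..<Suc p]"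
proof (induction r)
  case 0 then show ?case by simp
next
  case (Suc r)
  have "[p - r..<Suc p] = (p - r) # [Suc p - Suc r + 1..<Suc p]"
    using Suc.prems by (simp add: upt_conv_Cons Suc_diff_le) arith
  then show ?case using Suc by (simp add: Suc_diff_le)
qed

lemma Phi_runs_pk: "Phi_runs D = map runpq (pk 0 0 D)"
proof -
  have hp: "high_peaks D = filter (\<lambda>j. is_peak D j \<and> height D j \<ge> 2) [Suc 0..<length D]"
  proof (cases "length D")
    case 0 then show ?thesis by (simp add: high_peaks_def)
  next
    case (Suc m)
    then show ?thesis unfolding high_peaks_def
      by (subst filter_upt_Cons) (auto simp: is_peak_def)
  qed
  have pr: "peak_run D j = runpq (ups (take j D), downs (take j D))" if "j \<in> set (high_peaks D)" for j
  proof -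
    from that have j: "j < length D" "height D j \<ge> 2" by (auto simp: high_peaks_def)
    define u where "u = ups (take j D)"
    define dd where "dd = downs (take j D)"
    have jud: "j = u + dd" using ups_downs_len[of "take j D"] j by (simp add: u_def dd_def)
    have h: "height D j = int u - int dd" by (simp add: height_def u_def dd_def ups_def downs_def)
    with j have ud: "dd + 2 \<le> u" by simp
    have b: "nat (height D j) = u - dd" using h ud by simp
    have p: "(j + (u - dd) - 2) div 2 = u - 1" using jud ud by simp
    show ?thesis unfolding peak_run_def Let_def b p
      using ud by (subst map_minus_upt) (auto simp: runpq_def u_def[symmetric] dd_def[symmetric])
  qed
  have "Phi_runs D = map (\<lambda>j. runpq (ups (take j D), downs (take j D))) (high_peaks D)"
    unfolding Phi_runs_def using pr by simp
  also have "\<dots> = map runpq (map (\<lambda>j. (ups (take j D), downs (take j D))) (high_peaks D))" by simp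
  also have "map (\<lambda>j. (ups (take j D), downs (take j D))) (high_peaks D) = pk 0 0 D"
    using peaks_pk[of "[]" D] hp by simp
  finally show ?thesis .
qed



definition ltp :: "nat \<times> nat \<Rightarrow> nat \<times> nat \<Rightarrow> bool" where
  "ltp a b \<longleftrightarrow> fst a < fst b \<and> snd a < snd b"

lemma pk_elems: "p \<in> set (pk u d X) \<Longrightarrow> u < fst p \<and> d \<le> snd p \<and> snd p + 2 \<le> fst p \<and> fst p \<le> u + ups X"
proof (induction X arbitrary: u d)
  case Nil then show ?case by simp
next
  case (Cons x r)
  show ?case
  proof (cases x)
    case True
    with Cons show ?thesis by (auto split: if_splits dest!: Cons.IH)
  next
    case False
    with Cons show ?thesis by (auto dest!: Cons.IH)
  qed
qed

lemma pk_sorted: "sorted_wrt ltp (pk u d X)"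
proof (induction X arbitrary: u d)
  case Nil then show ?case by simp
next
  case (Cons x r)
  show ?case
  proof (cases x)
    case True
    show ?thesis
    proof (cases "r \<noteq> [] \<and> \<not> hd r \<and> d + 2 \<le> Suc u")
      case c: True
      then obtain r' where r: "r = False # r'" by (cases r) auto
      have "\<forall>q\<in>set (pk (Suc u) d r). ltp (Suc u, d) q"
      proof
        fix q assume "q \<in> set (pk (Suc u) d r)"
        then have "q \<in> set (pk (Suc u) (Suc d) r')" by (simp add: r)
        from pk_elems[OF this] show "ltp (Suc u, d) q" by (simp add: ltp_def)
      qed
      then show ?thesis using True c Cons.IH by (simp add: sorted_wrt_append)
    next
      case False
      then show ?thesis using True Cons.IH by auto
    qed
  next
    case False
    then show ?thesis using Cons.IH by simp
  qed
qed

lemma pk_L: "False \<in> set r \<Longrightarrow> d + 1 \<le> u \<Longrightarrow> \<exists>U. (U, d) \<in> set (pk u d (True # r))"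
proof (induction r arbitrary: u)
  case Nil then show ?case by simp
next
  case (Cons y r)
  show ?case
  proof (cases y)
    case False then show ?thesis using Cons.prems by auto
  next
    case True
    then have "False \<in> set r" using Cons.prems by auto
    from Cons.IH[OF this, of "Suc u"] Cons.prems True show ?thesis by auto
  qed
qed

lemma downs_nz: "downs r \<noteq> 0 \<Longrightarrow> False \<in> set r"
  by (induction r) (auto split: if_splits)

lemma pk_inj_aux:
  assumes "d + 1 \<le> u" "nnr u d (True # r2)" "u + ups (True # r2) = d + downs (True # r2)"
    "r2 = [] \<or> hd r2"
  shows "pk u d (True # False # r1) \<noteq> pk u d (True # r2)"
proof
  assume eq: "pk u d (True # False # r1) = pk u d (True # r2)"
  have m: "(Suc u, d) \<in> set (pk u d (True # r2))" unfolding eq[symmetric] using assms(1) by simp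
  show False
  proof (cases r2)
    case Nil then show False using assms(3) assms(1) by simp
  next
    case (Cons y r2')
    with assms(4) have y: y by simp
    have "pk u d (True # r2) = pk (Suc u) d r2" using Cons y by simp
    with m pk_elems[of "(Suc u, d)" "Suc u" d r2] Cons y show False by simp
  qed
qed

lemma pk_inj:
  "nnr u d D1 \<Longrightarrow> nnr u d D2 \<Longrightarrow> u + ups D1 = d + downs D1 \<Longrightarrow> u + ups D2 = d + downs D2
   \<Longrightarrow> length D1 = length D2 \<Longrightarrow> pk u d D1 = pk u d D2 \<Longrightarrow> D1 = D2"
proof (induction D1 arbitrary: D2 u d)
  case Nil then show ?case by simp
next
  case (Cons x1 r1)
  then obtain x2 r2 where D2: "D2 = x2 # r2" by (cases D2) auto
  have cross: False if "nnr u d (True # r1)" "nnr u d (False # r2)"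
      "u + ups (True # r1) = d + downs (True # r1)"
      "pk u d (True # r1) = pk u d (False # r2)" for u d r1 r2
  proof -
    from that(2) have "Suc d \<le> u" by (auto dest: nnr_le)
    moreover from that(3) this have "downs r1 \<noteq> 0" by simp
    then have "False \<in> set r1" by (rule downs_nz)
    ultimately obtain U where "(U, d) \<in> set (pk u d (True # r1))" using pk_L by force
    then have "(U, d) \<in> set (pk u d (False # r2))" by (metis that(4))
    then have "(U, d) \<in> set (pk u (Suc d) r2)" by simp
    then show False using pk_elems by fastforce
  qed
  show ?case
  proof (cases x1; cases x2)
    assume a: x1 "\<not> x2"
    show ?thesis using cross[of u d r1 r2] Cons.prems a D2 by auto
  next
    assume a: "\<not> x1" x2
    show ?thesis using cross[of u d r2 r1] Cons.prems a D2 by auto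
  next
    assume a: "\<not> x1" "\<not> x2"
    then show ?thesis using Cons.prems D2 Cons.IH[of u "Suc d" r2] by auto
  next
    assume a: x1 x2
    define A1 where "A1 = (if r1 \<noteq> [] \<and> \<not> hd r1 \<and> d + 2 \<le> Suc u then [(Suc u, d)] else [])"
    define A2 where "A2 = (if r2 \<noteq> [] \<and> \<not> hd r2 \<and> d + 2 \<le> Suc u then [(Suc u, d)] else [])"
    show ?thesis
    proof (cases "A1 = A2")
      case True
      then have "pk (Suc u) d r1 = pk (Suc u) d r2" using Cons.prems a D2 by (simp add: A1_def A2_def)
      then show ?thesis using Cons.prems D2 a Cons.IH[of "Suc u" d r2] by auto
    next
      case False
      show ?thesis
      proof (cases "r1 \<noteq> [] \<and> \<not> hd r1")
        case True
        then obtain r1' where r1: "r1 = False # r1'" by (cases r1) auto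
        with False have "d + 1 \<le> u" "r2 = [] \<or> hd r2" by (auto simp: A1_def A2_def split: if_splits)
        then show ?thesis using pk_inj_aux[of d u r2 r1'] Cons.prems D2 a r1 by auto
      next
        case c: False
        with False have "r2 \<noteq> [] \<and> \<not> hd r2" "d + 1 \<le> u" by (auto simp: A1_def A2_def split: if_splits)
        then obtain r2' where r2: "r2 = False # r2'" by (cases r2) auto
        have "r1 = [] \<or> hd r1" using c by auto
        then show ?thesis using pk_inj_aux[of d u r1 r2'] Cons.prems D2 a r2 \<open>d + 1 \<le> u\<close> by auto
      qed
    qed
  qed
qed



definition seg :: "nat \<Rightarrow> nat \<Rightarrow> nat \<Rightarrow> nat \<Rightarrow> bool list" where
  "seg u d U Dn = replicate (min u Dn - d) False @ concat (replicate (Dn - u) [True, False])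
     @ replicate (U - max u Dn) True @ [False]"

definition tlp :: "nat \<Rightarrow> nat \<Rightarrow> nat \<Rightarrow> bool list" where
  "tlp u d N = replicate (u - d) False @ concat (replicate (N - u) [True, False])"

fun psi :: "nat \<Rightarrow> nat \<Rightarrow> (nat \<times> nat) list \<Rightarrow> nat \<Rightarrow> bool list" where
  "psi u d [] N = tlp u d N"
| "psi u d (p # S) N = seg u d (fst p) (snd p) @ psi (fst p) (Suc (snd p)) S N"

definition vS :: "nat \<Rightarrow> nat \<Rightarrow> nat \<Rightarrow> (nat \<times> nat) list \<Rightarrow> bool" where
  "vS u d N S \<longleftrightarrow> sorted_wrt ltp S \<and> (\<forall>p\<in>set S. u < fst p \<and> d \<le> snd p \<and> snd p + 2 \<le> fst p \<and> fst p \<le> N)"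

lemma ups_rep[simp]: "ups (replicate k x) = (if x then k else 0)"
  by (induction k) auto
lemma downs_rep[simp]: "downs (replicate k x) = (if x then 0 else k)"
  by (induction k) auto
lemma ups_pairs[simp]: "ups (concat (replicate k [True, False])) = k"
  by (induction k) auto
lemma downs_pairs[simp]: "downs (concat (replicate k [True, False])) = k"
  by (induction k) auto

lemma pk_repF: "pk u d (replicate k False @ ys) = pk u (d + k) ys"
  by (induction k arbitrary: d) auto
lemma pk_pairs: "pk u u (concat (replicate k [True, False]) @ ys) = pk (u + k) (u + k) ys"
  by (induction k arbitrary: u) auto
lemma pk_repT: "pk u d (replicate (Suc k) True @ False # ys) =
   (if d + 2 \<le> u + Suc k then [(u + Suc k, d)] else []) @ pk (u + Suc k) d (False # ys)"
proof (induction k arbitrary: u)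
  case 0 then show ?case by simp
next
  case (Suc k)
  have "pk u d (replicate (Suc (Suc k)) True @ False # ys) = pk (Suc u) d (replicate (Suc k) True @ False # ys)"
    by simp
  then show ?case using Suc[of "Suc u"] by simp
qed
lemma nnr_le_iff: "(d \<le> u \<and> nnr u d ys) = nnr u d ys"
  using nnr_le by blast

lemma nnr_repF: "nnr u d (replicate k False @ ys) = (d + k \<le> u \<and> nnr u (d + k) ys)"
proof (induction k arbitrary: d)
  case 0 show ?case using nnr_le[of u d ys] by auto
next
  case (Suc k) 
  have "nnr u d (replicate (Suc k) False @ ys) = (d \<le> u \<and> nnr u (Suc d) (replicate k False @ ys))" by simp
  also have "\<dots> = (d \<le> u \<and> Suc d + k \<le> u \<and> nnr u (Suc d + k) ys)" using Suc by simp
  finally show ?case by auto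
qed
lemma nnr_repT: "nnr u d (replicate k True @ ys) = (d \<le> u \<and> nnr (u + k) d ys)"
proof (induction k arbitrary: u)
  case 0 show ?case using nnr_le[of u d ys] by auto
next
  case (Suc k) 
  have "nnr u d (replicate (Suc k) True @ ys) = (d \<le> u \<and> nnr (Suc u) d (replicate k True @ ys))" by simp
  also have "\<dots> = (d \<le> u \<and> d \<le> Suc u \<and> nnr (Suc u + k) d ys)" using Suc by simp
  finally show ?case by auto
qed
lemma nnr_pairs: "nnr u u (concat (replicate k [True, False]) @ ys) = nnr (u + k) (u + k) ys"
proof (induction k arbitrary: u)
  case 0 show ?case by simp
next
  case (Suc k)
  have "nnr u u (concat (replicate (Suc k) [True, False]) @ ys) = nnr (Suc u) (Suc u) (concat (replicate k [True, False]) @ ys)" by simp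
  then show ?case using Suc by simp
qed
lemma psi_props:
  "d \<le> u \<Longrightarrow> u \<le> N \<Longrightarrow> vS u d N S \<Longrightarrow>
   pk u d (psi u d S N) = S \<and> nnr u d (psi u d S N) \<and> ups (psi u d S N) = N - u \<and> downs (psi u d S N) = N - d"
proof (induction S arbitrary: u d)
  case Nil
  have a: "pk u u (concat (replicate (N - u) [True, False])) = []"
    using pk_pairs[of u "N - u" "[]"] by simp
  have b: "nnr u u (concat (replicate (N - u) [True, False]))"
    using nnr_pairs[of u "N - u" "[]"] Nil by simp
  show ?case using Nil a b by (simp add: tlp_def pk_repF nnr_repF)
next
  case (Cons p S)
  obtain U Dn where p: "p = (U, Dn)" by (cases p)
  from Cons.prems p have c: "u < U" "d \<le> Dn" "Dn + 2 \<le> U" "U \<le> N" by (auto simp: vS_def)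
  have v': "vS U (Suc Dn) N S" using Cons.prems p
    by (auto simp: vS_def ltp_def)
  have IH: "pk U (Suc Dn) (psi U (Suc Dn) S N) = S \<and> nnr U (Suc Dn) (psi U (Suc Dn) S N)
      \<and> ups (psi U (Suc Dn) S N) = N - U \<and> downs (psi U (Suc Dn) S N) = N - Suc Dn"
    using Cons.IH[OF _ _ v'] c by simp
  define R where "R = psi U (Suc Dn) S N"
  have eq: "psi u d (p # S) N = seg u d U Dn @ R" by (simp add: p R_def)
  show ?case
  proof (cases "Dn \<le> u")
    case True
    define k where "k = U - u - 1"
    have k: "U - u = Suc k" using c by (simp add: k_def)
    then have sg: "seg u d U Dn = replicate (Dn - d) False @ replicate (Suc k) True @ False # []"
      using c True by (simp add: seg_def)
    have uk: "u + Suc k = U" using k c by arith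
    show ?thesis unfolding eq sg using IH c True uk
      apply (simp only: append_assoc append_Cons append_Nil pk_repF nnr_repF pk_repT nnr_repT uk)
      apply (simp add: R_def p)
      using uk c by arith
  next
    case False
    define k where "k = U - Dn - 1"
    have k: "U - Dn = Suc k" using c by (simp add: k_def)
    then have sg: "seg u d U Dn = replicate (u - d) False @ concat (replicate (Dn - u) [True, False])
       @ replicate (Suc k) True @ False # []"
      using c False by (simp add: seg_def)
    have uk: "Dn + Suc k = U" using k c by arith
    have dd: "d + (u - d) = u" using Cons.prems(1) by simp
    have ud: "u + (Dn - u) = Dn" using False by simp
    show ?thesis unfolding eq sg using IH c False Cons.prems(1) uk
      apply (simp only: append_assoc append_Cons append_Nil pk_repF nnr_repF dd)
      apply (simp only: pk_pairs nnr_pairs ud pk_repT nnr_repT uk)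
      apply (simp add: R_def p uk)
      using uk c False by arith
  qed
qed



lemma dyck_iff: "dyck_path m D \<longleftrightarrow> length D = 2 * m \<and> ups D = m \<and> downs D = m \<and> nnr 0 0 D"
proof -
  have h: "height D j = int (ups (take j D)) - int (downs (take j D))" for j
    by (simp add: height_def ups_def downs_def)
  show ?thesis
  proof
    assume a: "dyck_path m D"
    then have l: "length D = 2 * m" by (simp add: dyck_path_def)
    then have t: "take (2 * m) D = D" by simp
    from a have "height D (2 * m) = 0" by (simp add: dyck_path_def)
    then have e: "ups D = downs D" using h[of "2*m"] t by simp
    moreover have "ups D + downs D = 2 * m" using ups_downs_len[of D] l by simp
    moreover have "nnr 0 0 D" unfolding nnr_take using a l h by (auto simp: dyck_path_def)
    ultimately show "length D = 2 * m \<and> ups D = m \<and> downs D = m \<and> nnr 0 0 D" using l by simp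
  next
    assume a: "length D = 2 * m \<and> ups D = m \<and> downs D = m \<and> nnr 0 0 D"
    then have t: "take (2 * m) D = D" by simp
    show "dyck_path m D" unfolding dyck_path_def using a t h nnr_take[of 0 0 D] by auto
  qed
qed

definition fl :: "nat \<Rightarrow> nat list \<Rightarrow> nat list" where
  "fl i xs = filter (\<lambda>z. z = i \<or> z = Suc i) xs"

definition Alt :: "nat list \<Rightarrow> bool" where
  "Alt w \<longleftrightarrow> (\<forall>i. successively (\<noteq>) (fl i w))"

lemma swap_sym: "swap_step x y \<Longrightarrow> swap_step y x"
  unfolding swap_step_def by blast

lemma swap_fl: "swap_step x y \<Longrightarrow> fl i x = fl i y"
  unfolding swap_step_def fl_def by auto

lemma swap_set: "swap_step x y \<Longrightarrow> set x = set y \<and> length x = length y"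
  unfolding swap_step_def by auto

lemma equiv_fl: "word_equiv x y \<Longrightarrow> fl i x = fl i y"
  unfolding word_equiv_def by (induction rule: rtranclp_induct) (auto dest: swap_fl)

lemma equiv_set: "word_equiv x y \<Longrightarrow> set x = set y \<and> length x = length y"
  unfolding word_equiv_def by (induction rule: rtranclp_induct) (auto dest: swap_set)

lemma equiv_sym: "word_equiv x y \<Longrightarrow> word_equiv y x"
  unfolding word_equiv_def
proof (induction rule: rtranclp_induct)
  case base then show ?case by simp
next
  case (step y z)
  then show ?case using swap_sym converse_rtranclp_into_rtranclp by metis
qed

lemma succ_aa: "\<not> successively (\<noteq>) (xs @ [a, a] @ ys)"
  by (auto simp: successively_append_iff)

lemma Alt_no_zero: "Alt (u @ m @ v) \<Longrightarrow> \<not> zero_rel n m"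
proof
  assume A: "Alt (u @ m @ v)" and z: "zero_rel n m"
  from z consider (a) i where "1 \<le> i" "m = [i, i]" | (b) i where "1 \<le> i" "m = [i, Suc i, i]"
    | (c) i where "m = [Suc i, i, Suc i]"
    unfolding zero_rel_def by auto
  then show False
  proof cases
    case a
    then have "successively (\<noteq>) (fl i (u @ m @ v))" using A by (simp add: Alt_def)
    then show False using a succ_aa[of "fl i u" i "fl i v"] by (simp add: fl_def)
  next
    case b
    then obtain j where j: "i = Suc j" by (cases i) auto
    then have "successively (\<noteq>) (fl j (u @ m @ v))" using A by (simp add: Alt_def)
    then show False using b j succ_aa[of "fl j u" i "fl j v"] by (simp add: fl_def)
  next
    case c
    then have "successively (\<noteq>) (fl (Suc i) (u @ m @ v))" using A by (simp add: Alt_def)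
    then show False using c succ_aa[of "fl (Suc i) u" "Suc i" "fl (Suc i) v"] by (simp add: fl_def)
  qed
qed

lemma ideal_sum_zero:
  fixes f :: "nat list \<Rightarrow>\<^sub>0 'k::field"
  assumes "in_nTL_ideal n f" "finite C"
    "\<And>x u m v. x \<in> C \<Longrightarrow> x = u @ m @ v \<Longrightarrow> \<not> zero_rel n m"
    "\<And>u a b v. comm_rel n a b \<Longrightarrow> (u @ a @ v \<in> C \<longleftrightarrow> u @ b @ v \<in> C)"
  shows "(\<Sum>x\<in>C. Poly_Mapping.lookup f x) = 0"
  using assms(1)
proof (induction rule: in_nTL_ideal.induct)
  case zero show ?case 
    apply (rule sum.neutral)
    apply (rule ballI)
    apply (rule lookup_zero)
    done
next
  case (mono f m u v c)
  have "u @ m @ v \<notin> C" using assms(3) mono.hyps(2) by blast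
  then show ?case using mono.IH assms(2)
    by (simp add: lookup_add lookup_single sum.distrib when_def)
next
  case (comm f a b u v c)
  have "(\<Sum>x\<in>C. Poly_Mapping.lookup (Poly_Mapping.single (u @ a @ v) c) x) = (\<Sum>x\<in>C. Poly_Mapping.lookup (Poly_Mapping.single (u @ b @ v) c) x)"
    using assms(4)[OF comm.hyps(2), of u v] assms(2)
    by (simp add: lookup_single when_def sum.delta)
  then show ?case using comm.IH assms(2)
    by (simp add: lookup_add lookup_minus sum.distrib sum_subtractf)
qed

lemma nonreducible_if_Alt:
  assumes "Alt w0"
  shows "\<not> reducible TYPE('k::field) n w0"
proof
  assume r: "reducible TYPE('k) n w0"
  define C where "C = {x. word_equiv w0 x}"
  have fin: "finite C"
  proof (rule finite_subset)
    show "C \<subseteq> {x. set x \<subseteq> set w0 \<and> length x = length w0}"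
    proof
      fix x assume "x \<in> C"
      then have "word_equiv w0 x" by (simp add: C_def)
      from equiv_set[OF this] show "x \<in> {x. set x \<subseteq> set w0 \<and> length x = length w0}" by simp
    qed
    show "finite {x. set x \<subseteq> set w0 \<and> length x = length w0}"
      by (rule finite_lists_length_eq) simp
  qed
  have altC: "Alt x" if "x \<in> C" for x
  proof -
    from that have "word_equiv w0 x" by (simp add: C_def)
    then have "fl i x = fl i w0" for i using equiv_fl by metis
    then show ?thesis using assms by (simp add: Alt_def)
  qed
  have c3: "\<not> zero_rel n m" if "x \<in> C" "x = u @ m @ v" for x u m v
    using altC[OF that(1)] that(2) Alt_no_zero by blast
  have c4: "(u @ a @ v \<in> C \<longleftrightarrow> u @ b @ v \<in> C)" if "comm_rel n a b" for u a b v
  proof -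
    from that have s: "swap_step (u @ a @ v) (u @ b @ v)"
      unfolding comm_rel_def swap_step_def by blast
    then have "word_equiv (u @ a @ v) (u @ b @ v)" "word_equiv (u @ b @ v) (u @ a @ v)"
      unfolding word_equiv_def by (auto intro: swap_sym)
    then show ?thesis unfolding C_def word_equiv_def by (auto intro: rtranclp_trans)
  qed
  from r have "in_nTL_ideal n (Poly_Mapping.single w0 (1::'k))" by (simp add: reducible_def)
  have "(\<Sum>x\<in>C. Poly_Mapping.lookup (Poly_Mapping.single w0 (1::'k)) x) = 0"
    apply (rule ideal_sum_zero[OF \<open>in_nTL_ideal n (Poly_Mapping.single w0 (1::'k))\<close> fin])
    using c3 c4 by blast+
  moreover have "w0 \<in> C" unfolding C_def word_equiv_def by simp
  moreover have "(\<Sum>x\<in>C. Poly_Mapping.lookup (Poly_Mapping.single w0 (1::'k)) x) = (\<Sum>x\<in>C. if w0 = x then (1::'k) else 0)"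
    by (rule sum.cong) (auto simp: lookup_single when_def)
  ultimately show False using fin by (simp add: sum.delta)
qed



lemma fl_Nil[simp]: "fl i [] = []" by (simp add: fl_def)

lemma fl_append[simp]: "fl i (xs @ ys) = fl i xs @ fl i ys"
  by (simp add: fl_def)

lemma fl_upt: "fl i [a..<b] = (if a \<le> i \<and> i < b then [i] else []) @ (if a \<le> Suc i \<and> Suc i < b then [Suc i] else [])"
proof (induction b)
  case 0 then show ?case by (simp add: fl_def)
next
  case (Suc b)
  show ?case
  proof (cases "a \<le> b")
    case True
    then have "[a..<Suc b] = [a..<b] @ [b]" by simp
    then show ?thesis using Suc True by (auto simp: fl_def)
  next
    case False
    then show ?thesis by (auto simp: fl_def)
  qed
qed

lemma fl_run: "fl i (rev [a..<b]) = (if a \<le> Suc i \<and> Suc i < b then [Suc i] else []) @ (if a \<le> i \<and> i < b then [i] else [])"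
proof -
  have "fl i (rev [a..<b]) = rev (fl i [a..<b])" by (simp add: fl_def rev_filter)
  then show ?thesis by (simp add: fl_upt)
qed

lemma W_Cons[simp]: "W (p # S) = runpq p @ W S" by (simp add: W_def)
lemma W_Nil[simp]: "W [] = []" by (simp add: W_def)

lemma set_W: "x \<in> set (W S) \<Longrightarrow> \<exists>p\<in>set S. snd p < x \<and> x < fst p"
  by (induction S) (auto simp: runpq_def)

lemma fl_W_empty: "\<forall>p\<in>set S. Suc i \<le> snd p \<Longrightarrow> fl i (W S) = []"
  unfolding fl_def filter_empty_conv using set_W by fastforce

lemma fl_W_hd: "\<forall>p\<in>set S. Suc (Suc i) \<le> fst p \<Longrightarrow> fl i (W S) = [] \<or> hd (fl i (W S)) = Suc i"
proof (induction S)
  case Nil then show ?case by simp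
next
  case (Cons p S)
  then show ?case by (cases p) (auto simp: runpq_def fl_run)
qed

lemma Alt_W: "sorted_wrt ltp S \<Longrightarrow> \<forall>p\<in>set S. snd p + 2 \<le> fst p \<Longrightarrow> Alt (W S)"
proof (induction S)
  case Nil then show ?case by (simp add: Alt_def fl_def)
next
  case (Cons p S)
  obtain U D where p: "p = (U, D)" by (cases p)
  have IH: "Alt (W S)" using Cons by simp
  have gt: "\<forall>q\<in>set S. U < fst q \<and> D < snd q" using Cons.prems p by (auto simp: ltp_def)
  show ?case unfolding Alt_def
  proof
    fix i
    have s2: "successively (\<noteq>) (fl i (W S))" using IH by (simp add: Alt_def)
    have s1: "successively (\<noteq>) (fl i (runpq p))" by (simp add: p runpq_def fl_run)
    have j: "fl i (runpq p) = [] \<or> fl i (W S) = [] \<or> last (fl i (runpq p)) \<noteq> hd (fl i (W S))"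
    proof (cases "Suc D \<le> i \<and> i < U")
      case True
      then have "last (fl i (runpq p)) = i" by (simp add: p runpq_def fl_run)
      moreover have "fl i (W S) = [] \<or> hd (fl i (W S)) = Suc i"
        using gt True by (intro fl_W_hd) auto
      ultimately show ?thesis by auto
    next
      case False
      show ?thesis
      proof (cases "Suc D \<le> Suc i \<and> Suc i < U")
        case True
        with False have "D = i" by auto
        then have "fl i (W S) = []" using gt by (intro fl_W_empty) auto
        then show ?thesis by simp
      next
        case False2: False
        then show ?thesis using False by (auto simp: p runpq_def fl_run)
      qed
    qed
    show "successively (\<noteq>) (fl i (W (p # S)))"
      using s1 s2 j by (simp add: successively_append_iff)
  qed
qed

definition LMp :: "nat list \<Rightarrow> bool" where
  "LMp w \<longleftrightarrow> (\<forall>k<length w. \<forall>b. b + 2 \<le> w ! k \<longrightarrow> fl b (drop k w) = [] \<or> hd (fl b (drop k w)) = Suc b)"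

lemma run_nth: "k < U - Suc D \<Longrightarrow> runpq (U, D) ! k = U - Suc k"
  by (simp add: runpq_def rev_nth)

lemma run_drop: assumes "D < U" shows "drop k (runpq (U, D)) = rev [Suc D..<U - k]"
proof (cases "k \<le> U - Suc D")
  case True
  have "take (U - Suc D - k) [Suc D..<U] = [Suc D..<Suc D + (U - Suc D - k)]"
    by (rule take_upt) (use True assms in linarith)
  moreover have "Suc D + (U - Suc D - k) = U - k" using True assms by linarith
  moreover have "drop k (runpq (U, D)) = rev (take (U - Suc D - k) [Suc D..<U])"
    unfolding runpq_def drop_rev by simp
  ultimately show ?thesis by metis
next
  case False
  then show ?thesis by (simp add: runpq_def drop_rev)
qed

lemma LM_W: "sorted_wrt ltp S \<Longrightarrow> \<forall>p\<in>set S. snd p + 2 \<le> fst p \<Longrightarrow> LMp (W S)"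
proof (induction S)
  case Nil then show ?case by (simp add: LMp_def)
next
  case (Cons p S)
  obtain U D where p: "p = (U, D)" by (cases p)
  have IH: "LMp (W S)" using Cons by simp
  have gt: "\<forall>q\<in>set S. U < fst q \<and> D < snd q" using Cons.prems p by (auto simp: ltp_def)
  have len: "length (runpq p) = U - Suc D" by (simp add: p runpq_def)
  show ?case unfolding LMp_def
  proof (intro allI impI)
    fix k b
    assume k: "k < length (W (p # S))" and b: "b + 2 \<le> W (p # S) ! k"
    show "fl b (drop k (W (p # S))) = [] \<or> hd (fl b (drop k (W (p # S)))) = Suc b"
    proof (cases "k < length (runpq p)")
      case True
      then have nk: "W (p # S) ! k = U - Suc k" using len run_nth p by (simp add: nth_append)
      have "D < U" using Cons.prems p by simp
      then have dk: "drop k (W (p # S)) = rev [Suc D..<U - k] @ W S" using True p run_drop by simp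
      show ?thesis
      proof (cases "D \<le> b")
        case True
        have "Suc b < U - k" using b nk by linarith
        then show ?thesis unfolding dk using True by (simp add: fl_run)
      next
        case False
        have "fl b (W S) = []" using gt False by (intro fl_W_empty) auto
        then show ?thesis unfolding dk using False by (simp add: fl_run)
      qed
    next
      case False
      then have "W (p # S) ! k = W S ! (k - length (runpq p))"
        "drop k (W (p # S)) = drop (k - length (runpq p)) (W S)" by (simp_all add: nth_append)
      moreover have "k - length (runpq p) < length (W S)" using k False by simp
      ultimately show ?thesis using IH b unfolding LMp_def by simp
    qed
  qed
qed

lemma first_diff: "length xs = length ys \<Longrightarrow> xs \<noteq> ys \<Longrightarrow>
   \<exists>s a b r1 r2. xs = s @ a # r1 \<and> ys = s @ b # r2 \<and> a \<noteq> b"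
proof (induction xs arbitrary: ys)
  case Nil then show ?case by simp
next
  case (Cons x xs)
  then obtain y ys' where ys: "ys = y # ys'" by (cases ys) auto
  show ?case
  proof (cases "x = y")
    case True
    then have ne: "xs \<noteq> ys'" using Cons ys by simp
    have "length xs = length ys'" using Cons.prems ys by simp
    from Cons.IH[OF this ne] obtain s a b r1 r2 where "xs = s @ a # r1" "ys' = s @ b # r2" "a \<noteq> b"
      by blast
    then show ?thesis using ys True by (intro exI[of _ "x # s"]) auto
  next
    case False
    then show ?thesis using ys by (intro exI[of _ "[]"]) auto
  qed
qed

lemma lexmin: "LMp w0 \<Longrightarrow> length x = length w0 \<Longrightarrow> (\<forall>i. fl i x = fl i w0) \<Longrightarrow> x = w0 \<or> lex_less w0 x"
proof (rule ccontr)
  assume LM: "LMp w0" and l: "length x = length w0" and f: "\<forall>i. fl i x = fl i w0"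
    and n: "\<not> (x = w0 \<or> lex_less w0 x)"
  have "w0 \<noteq> x" using n by auto
  from first_diff[OF l[symmetric] this] obtain s a b r1 r2
    where w: "w0 = s @ a # r1" and x: "x = s @ b # r2" and ab: "a \<noteq> b"
    by blast
  have fi: "fl i (a # r1) = fl i (b # r2)" for i using f[rule_format, of i] w x by simp
  have "\<not> a < b"
  proof
    assume "a < b"
    then have "(w0, x) \<in> lexord {(a, b). a < b}" unfolding lexord_def using w x by blast
    then show False using n by (simp add: lex_less_def)
  qed
  then have ba: "b < a" using ab by simp
  show False
  proof (cases "Suc b = a")
    case True
    then show False using fi[of b] by (simp add: fl_def)
  next
    case False
    then have "b + 2 \<le> a" using ba by simp
    moreover have "length s < length w0" "w0 ! length s = a" "drop (length s) w0 = a # r1" using w by simp_all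
    moreover have "\<forall>b. b + 2 \<le> w0 ! length s \<longrightarrow> fl b (drop (length s) w0) = [] \<or> hd (fl b (drop (length s) w0)) = Suc b"
      using LM \<open>length s < length w0\<close> unfolding LMp_def by blast
    ultimately have "fl b (a # r1) = [] \<or> hd (fl b (a # r1)) = Suc b" by simp
    then show False using fi[of b] by (simp add: fl_def)
  qed
qed

lemma monomial_W:
  assumes "vS 0 0 (Suc n) S"
  shows "nTL_monomial TYPE('k::field) n (W S)"
proof -
  have s: "sorted_wrt ltp S" and e: "\<forall>p\<in>set S. snd p + 2 \<le> fst p \<and> fst p \<le> Suc n"
    using assms by (auto simp: vS_def)
  have iw: "is_word n (W S)"
    unfolding is_word_def using set_W e by fastforce
  have nr: "\<not> reducible TYPE('k) n (W S)"
    by (rule nonreducible_if_Alt, rule Alt_W) (use s e in auto)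
  have lm: "LMp (W S)" by (rule LM_W) (use s e in auto)
  have "w' = W S \<or> lex_less (W S) w'" if "word_equiv (W S) w'" for w'
  proof -
    have "\<forall>i. fl i w' = fl i (W S)" using equiv_fl[OF that] by simp
    moreover have "length w' = length (W S)" using equiv_set[OF that] by simp
    ultimately show ?thesis using lexmin[OF lm] by blast
  qed
  then show ?thesis using iw nr by (simp add: nTL_monomial_def)
qed



lemma ideal_add: "in_nTL_ideal n g \<Longrightarrow> in_nTL_ideal n f \<Longrightarrow> in_nTL_ideal n (f + g)"
proof (induction rule: in_nTL_ideal.induct)
  case zero then show ?case by simp
next
  case (mono g m u v c)
  then have "in_nTL_ideal n ((f + g) + Poly_Mapping.single (u @ m @ v) c)"
    by (intro in_nTL_ideal.mono) auto
  then show ?case by (simp add: add.assoc)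
next
  case (comm g a b u v c)
  then have "in_nTL_ideal n ((f + g) + (Poly_Mapping.single (u @ a @ v) c - Poly_Mapping.single (u @ b @ v) c))"
    by (intro in_nTL_ideal.comm) auto
  then show ?case by (simp add: add.assoc)
qed

lemma swap_ideal:
  assumes "is_word n x" "swap_step x y"
  shows "in_nTL_ideal n (Poly_Mapping.single x (c::'k::field) - Poly_Mapping.single y c)"
proof -
  from assms(2) obtain u v i j where ij: "i + 1 < j \<or> j + 1 < i" and x: "x = u @ [i, j] @ v" and y: "y = u @ [j, i] @ v"
    unfolding swap_step_def by blast
  have cr: "comm_rel n [i, j] [j, i]" using assms(1) ij x unfolding comm_rel_def is_word_def by auto
  have "is_word n u" "is_word n v" using assms(1) x unfolding is_word_def by auto
  from in_nTL_ideal.comm[OF in_nTL_ideal.zero cr this, of c]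
  show ?thesis using x y by simp
qed

lemma equiv_ideal:
  assumes "word_equiv x y" "is_word n x"
  shows "in_nTL_ideal n (Poly_Mapping.single x (c::'k::field) - Poly_Mapping.single y c)"
  using assms(1) unfolding word_equiv_def
proof (induction rule: rtranclp_induct)
  case base then show ?case by (simp add: in_nTL_ideal.zero)
next
  case (step y z)
  have "set y = set x" using equiv_set[of x y] step.hyps(1) by (simp add: word_equiv_def)
  then have "is_word n y" using assms(2) by (simp add: is_word_def)
  from ideal_add[OF swap_ideal[OF this step.hyps(2), of c] step.IH]
  show ?case by (simp add: algebra_simps)
qed

lemma reducible_equiv:
  assumes "is_word n w" "word_equiv w w'" "w' = u @ m @ v" "zero_rel n m"
  shows "reducible TYPE('k::field) n w"
proof -
  have "set w' = set w" using equiv_set[OF assms(2)] by simp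
  then have "is_word n w'" using assms(1) by (simp add: is_word_def)
  then have "is_word n u" "is_word n v" using assms(3) by (auto simp: is_word_def)
  from in_nTL_ideal.mono[OF in_nTL_ideal.zero assms(4) this, of "1::'k"]
  have a: "in_nTL_ideal n (Poly_Mapping.single w' (1::'k))" using assms(3) by simp
  have b: "in_nTL_ideal n (Poly_Mapping.single w (1::'k) - Poly_Mapping.single w' 1)"
    by (rule equiv_ideal[OF assms(2,1)])
  from ideal_add[OF a b] show ?thesis by (simp add: reducible_def)
qed

lemma mono_adj:
  assumes "nTL_monomial TYPE('k::field) n w" "w = s @ [x, y] @ t"
  shows "y + 1 = x \<or> x < y"
proof -
  have iw: "is_word n w" and nr: "\<not> reducible TYPE('k) n w"
    and lm: "\<And>w'. word_equiv w w' \<Longrightarrow> w' = w \<or> lex_less w w'"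
    using assms(1) by (auto simp: nTL_monomial_def)
  have "x \<noteq> y"
  proof
    assume "x = y"
    have "x \<in> set w" using assms(2) by simp
    then have zr: "zero_rel n [x, x]" using iw unfolding zero_rel_def is_word_def by auto
    have e: "word_equiv w w" by (simp add: word_equiv_def)
    have w2: "w = s @ [x, x] @ t" using assms(2) \<open>x = y\<close> by simp
    have "reducible TYPE('k) n w" by (rule reducible_equiv[OF iw e w2 zr])
    then show False using nr by simp
  qed
  moreover have "\<not> y + 2 \<le> x"
  proof
    assume a: "y + 2 \<le> x"
    have "swap_step w (s @ [y, x] @ t)" unfolding swap_step_def
      apply (rule exI[of _ s], rule exI[of _ t], rule exI[of _ x], rule exI[of _ y])
      using a assms(2) by simp
    then have "word_equiv w (s @ [y, x] @ t)" by (simp add: word_equiv_def)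
    moreover have "s @ [y, x] @ t \<noteq> w" using a assms(2) by simp
    ultimately have "lex_less w (s @ [y, x] @ t)" using lm by blast
    then show False using a assms(2) by (simp add: lex_less_def lexord_same_pref_iff)
  qed
  ultimately show ?thesis by linarith
qed

lemma succ_from_adj: "(\<And>xs a b ys. l = xs @ a # b # ys \<Longrightarrow> P a b) \<Longrightarrow> successively P l"
proof (induction l rule: induct_list012)
  case 1 then show ?case by simp
next
  case (2 x) then show ?case by simp
next
  case (3 x y zs)
  have "P x y" using "3.prems"[of "[]" x y zs] by simp
  moreover have "successively P (y # zs)"
  proof (rule "3.IH"(2))
    fix xs a b ys assume "y # zs = xs @ a # b # ys"
    then have "x # y # zs = (x # xs) @ a # b # ys" by simp
    then show "P a b" by (rule "3.prems")
  qed
  ultimately show ?case by simp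
qed

fun dec :: "nat list \<Rightarrow> (nat \<times> nat) list" where
  "dec [] = []"
| "dec (x # w) = (case dec w of [] \<Rightarrow> [(Suc x, x - 1)]
     | q # S \<Rightarrow> if fst q = x then (Suc (fst q), snd q) # S else (Suc x, x - 1) # q # S)"

lemma runpq_Suc: "D < U \<Longrightarrow> runpq (Suc U, D) = U # runpq (U, D)"
  by (simp add: runpq_def)

lemma W_dec:
  "(\<forall>x\<in>set w. 1 \<le> x) \<Longrightarrow> successively (\<lambda>x y. y + 1 = x \<or> x < y) w \<Longrightarrow>
   W (dec w) = w \<and> (\<forall>p\<in>set (dec w). snd p + 2 \<le> fst p) \<and> successively (\<lambda>p q. snd p + 2 < fst q) (dec w)
   \<and> (w \<noteq> [] \<longrightarrow> dec w \<noteq> [] \<and> fst (hd (dec w)) = Suc (hd w))"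
proof (induction w)
  case Nil then show ?case by simp
next
  case (Cons x w)
  have x1: "1 \<le> x" using Cons.prems by simp
  have IH: "W (dec w) = w \<and> (\<forall>p\<in>set (dec w). snd p + 2 \<le> fst p) \<and> successively (\<lambda>p q. snd p + 2 < fst q) (dec w)
   \<and> (w \<noteq> [] \<longrightarrow> dec w \<noteq> [] \<and> fst (hd (dec w)) = Suc (hd w))"
  proof -
    have sw: "successively (\<lambda>x y. y + 1 = x \<or> x < y) w" using Cons.prems(2) by (auto simp: successively_Cons)
    show ?thesis using Cons.IH[OF _ sw] Cons.prems(1) by simp
  qed
  show ?case
  proof (cases w)
    case Nil
    then show ?thesis using x1 by (simp add: runpq_def)
  next
    case (Cons y w')
    with IH obtain q S where d: "dec w = q # S" and fq: "fst q = Suc y" by (cases "dec w") auto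
    have yx: "y + 1 = x \<or> x < y" using Cons.prems Cons by simp
    show ?thesis
    proof (cases "y + 1 = x")
      case True
      then have fqx: "fst q = x" using fq by simp
      have sq: "snd q < x" using IH d fqx by auto
      have dx: "dec (x # w) = (Suc x, snd q) # S" using d fqx by simp
      have "W ((Suc x, snd q) # S) = x # W (q # S)"
        using runpq_Suc[OF sq] fqx by (cases q) simp
      then have w1: "W (dec (x # w)) = x # w" using dx d IH by simp
      have e1: "\<forall>p\<in>set (dec (x # w)). snd p + 2 \<le> fst p" using dx d IH fqx by auto
      have sc: "successively (\<lambda>p q. snd p + 2 < fst q) (q # S)" using IH d by simp
      then have s1: "successively (\<lambda>p q. snd p + 2 < fst q) (dec (x # w))"
        unfolding dx by (cases S) auto
      show ?thesis using w1 e1 s1 dx by simp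
    next
      case False
      then have xy: "x < y" using yx by simp
      then have fqx: "fst q \<noteq> x" using fq by simp
      have r: "runpq (Suc x, x - 1) = [x]" using x1 by (simp add: runpq_def)
      have dx: "dec (x # w) = (Suc x, x - 1) # q # S" using d fqx by simp
      have w1: "W (dec (x # w)) = x # w" using dx d IH r by simp
      have e1: "\<forall>p\<in>set (dec (x # w)). snd p + 2 \<le> fst p" using dx d IH x1 by auto
      have sc: "successively (\<lambda>p q. snd p + 2 < fst q) (q # S)" using IH d by simp
      have "x - 1 + 2 < fst q" using fq xy x1 by simp
      then have s1: "successively (\<lambda>p q. snd p + 2 < fst q) (dec (x # w))"
        unfolding dx using sc by simp
      show ?thesis using w1 e1 s1 dx by simp
    qed
  qed
qed

lemma dec_W_run: "dec R = S' \<Longrightarrow> (S' = [] \<or> D + 2 < fst (hd S')) \<Longrightarrow>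
   dec (runpq (D + 2 + k, D) @ R) = (D + 2 + k, D) # S'"
proof (induction k)
  case 0
  have "runpq (D + 2, D) = [Suc D]" by (simp add: runpq_def)
  then show ?case using 0 by (cases S') auto
next
  case (Suc k)
  have "runpq (D + 2 + Suc k, D) = (D + 2 + k) # runpq (D + 2 + k, D)"
    using runpq_Suc[of D "D + 2 + k"] by simp
  then show ?case using Suc by simp
qed

lemma dec_W: "(\<forall>p\<in>set S. snd p + 2 \<le> fst p) \<Longrightarrow> successively (\<lambda>p q. snd p + 2 < fst q) S \<Longrightarrow> dec (W S) = S"
proof (induction S)
  case Nil then show ?case by simp
next
  case (Cons p S)
  obtain U D where p: "p = (U, D)" by (cases p)
  define k where "k = U - (D + 2)"
  have "D + 2 \<le> U" using Cons.prems p by simp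
  then have k: "U = D + 2 + k" by (simp add: k_def)
  have "successively (\<lambda>p q. snd p + 2 < fst q) S" using Cons.prems(2) by (auto simp: successively_Cons)
  then have IH: "dec (W S) = S" using Cons.IH Cons.prems(1) by simp
  have "S = [] \<or> D + 2 < fst (hd S)" using Cons.prems p by (auto simp: successively_Cons)
  from dec_W_run[OF IH this, of k] show ?case using p k by simp
qed



lemma move_left: "(\<forall>z\<in>set zs. z + 1 < c \<or> c + 1 < z) \<Longrightarrow> swap_step\<^sup>*\<^sup>* (u @ zs @ [c] @ v) (u @ [c] @ zs @ v)"
proof (induction zs arbitrary: u)
  case Nil then show ?case by simp
next
  case (Cons z zs)
  have a: "swap_step\<^sup>*\<^sup>* ((u @ [z]) @ zs @ [c] @ v) ((u @ [z]) @ [c] @ zs @ v)"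
    using Cons.IH[of "u @ [z]"] Cons.prems by simp
  have b: "swap_step (u @ [z, c] @ (zs @ v)) (u @ [c, z] @ (zs @ v))"
  proof -
    have "z + 1 < c \<or> c + 1 < z" using Cons.prems by simp
    then show ?thesis unfolding swap_step_def by blast
  qed
  show ?case using a b by simp
qed

lemma rev_split: "a \<le> c \<Longrightarrow> c < b \<Longrightarrow> rev [a..<b] = rev [Suc c..<b] @ c # rev [a..<c]"
proof -
  assume "a \<le> c" "c < b"
  then have "[a..<b] = [a..<c] @ c # [Suc c..<b]"
    by (metis le_add_diff_inverse less_imp_le_nat upt_add_eq_append upt_conv_Cons)
  then show ?thesis by simp
qed

lemma strict_adj:
  assumes m: "nTL_monomial TYPE('k::field) n w"
    and w: "w = P @ runpq (U1, D1) @ runpq (U2, D2) @ Q"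
    and c: "D1 + 2 \<le> U1" "D2 + 2 \<le> U2" "D1 + 2 < U2"
  shows "U1 < U2 \<and> D1 < D2"
proof -
  have iw: "is_word n w" and nr: "\<not> reducible TYPE('k) n w" using m by (auto simp: nTL_monomial_def)
  have setw: "x \<in> set w \<Longrightarrow> 1 \<le> x \<and> x \<le> n" for x using iw by (auto simp: is_word_def)
  have "U1 < U2"
  proof (rule ccontr)
    assume "\<not> U1 < U2"
    define cc where "cc = U2 - 1"
    have h: "Suc D1 \<le> cc - 1" "cc < U1" "Suc D1 \<le> cc" using c \<open>\<not> U1 < U2\<close> by (auto simp: cc_def)
    have r1: "runpq (U1, D1) = rev [Suc cc..<U1] @ [cc, cc - 1] @ rev [Suc D1..<cc - 1]"
    proof -
      have "rev [Suc D1..<U1] = rev [Suc cc..<U1] @ cc # rev [Suc D1..<cc]" by (rule rev_split) (use h in auto)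
      moreover have "rev [Suc D1..<cc] = rev [Suc (cc - 1)..<cc] @ (cc - 1) # rev [Suc D1..<cc - 1]"
        by (rule rev_split) (use h in auto)
      moreover have "[Suc (cc - 1)..<cc] = []" using h by simp
      ultimately show ?thesis by (simp add: runpq_def)
    qed
    have r2: "runpq (U2, D2) = cc # rev [Suc D2..<cc]"
    proof -
      have "U2 = Suc cc" using c by (simp add: cc_def)
      then show ?thesis using c by (simp add: runpq_def)
    qed
    define A where "A = P @ rev [Suc cc..<U1] @ [cc, cc - 1]"
    define zs where "zs = rev [Suc D1..<cc - 1]"
    define B where "B = rev [Suc D2..<cc] @ Q"
    have w2: "w = A @ zs @ [cc] @ B" using w r1 r2 by (simp add: A_def zs_def B_def)
    have "\<forall>z\<in>set zs. z + 1 < cc \<or> cc + 1 < z" unfolding zs_def using h by auto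
    from move_left[OF this, of A B] have e: "word_equiv w (A @ [cc] @ zs @ B)" by (simp add: w2 word_equiv_def)
    have w3: "A @ [cc] @ zs @ B = (P @ rev [Suc cc..<U1]) @ [Suc (cc - 1), cc - 1, Suc (cc - 1)] @ (zs @ B)"
      using h by (simp add: A_def)
    have "cc \<in> set w" using w r2 by simp
    then have "1 \<le> cc - 1" "cc - 1 < n" using setw h by force+
    then have "zero_rel n [Suc (cc - 1), cc - 1, Suc (cc - 1)]" unfolding zero_rel_def
      by (intro disjI2 exI[of _ "cc - 1"]) simp
    then have "reducible TYPE('k) n w" by (rule reducible_equiv[OF iw e w3])
    with nr show False by simp
  qed
  moreover have "D1 < D2"
  proof (rule ccontr)
    assume "\<not> D1 < D2"
    define cc where "cc = Suc D1"
    have h: "Suc D2 \<le> cc" "cc < U1" "Suc cc < U2" "1 \<le> cc" using c \<open>\<not> D1 < D2\<close> by (auto simp: cc_def)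
    have r1: "runpq (U1, D1) = rev [Suc cc..<U1] @ [cc]"
      using rev_split[of cc cc U1] h by (simp add: runpq_def cc_def)
    have r2: "runpq (U2, D2) = rev [Suc (Suc cc)..<U2] @ [Suc cc, cc] @ rev [Suc D2..<cc]"
    proof -
      have "rev [Suc D2..<U2] = rev [Suc (Suc cc)..<U2] @ Suc cc # rev [Suc D2..<Suc cc]" by (rule rev_split) (use h in auto)
      moreover have "rev [Suc D2..<Suc cc] = rev [Suc cc..<Suc cc] @ cc # rev [Suc D2..<cc]"
        by (rule rev_split) (use h in auto)
      ultimately show ?thesis by (simp add: runpq_def)
    qed
    define A where "A = P @ rev [Suc cc..<U1]"
    define zs where "zs = rev [Suc (Suc cc)..<U2]"
    define B where "B = [Suc cc, cc] @ rev [Suc D2..<cc] @ Q"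
    have w2: "w = A @ [cc] @ zs @ B" using w r1 r2 by (simp add: A_def zs_def B_def)
    have "\<forall>z\<in>set zs. z + 1 < cc \<or> cc + 1 < z" unfolding zs_def using h by auto
    from move_left[OF this, of A B] have e: "word_equiv w (A @ zs @ [cc] @ B)"
      by (simp add: w2 word_equiv_def) (metis equiv_sym word_equiv_def)
    have w3: "A @ zs @ [cc] @ B = (A @ zs) @ [cc, Suc cc, cc] @ (rev [Suc D2..<cc] @ Q)"
      by (simp add: B_def)
    have "Suc cc \<in> set w" using w r2 by simp
    then have "1 \<le> cc" "cc < n" using setw h by force+
    then have "zero_rel n [cc, Suc cc, cc]" unfolding zero_rel_def
      by (intro disjI2 exI[of _ cc]) simp
    then have "reducible TYPE('k) n w" by (rule reducible_equiv[OF iw e w3])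
    with nr show False by simp
  qed
  ultimately show ?thesis by simp
qed



lemma W_append: "W (xs @ ys) = W xs @ W ys" by (simp add: W_def)

lemma Phi_W: "Phi D = W (pk 0 0 D)"
  by (simp add: Phi_def Phi_runs_pk W_def)

lemma vS_pk: "dyck_path (n + 1) D \<Longrightarrow> vS 0 0 (Suc n) (pk 0 0 D)"
  using pk_sorted[of 0 0 D] pk_elems[of _ 0 0 D] unfolding dyck_iff vS_def by auto

lemma vS_chain: "vS 0 0 N S \<Longrightarrow> successively (\<lambda>p q. snd p + 2 < fst q) S \<and> (\<forall>p\<in>set S. snd p + 2 \<le> fst p)"
proof -
  assume v: "vS 0 0 N S"
  then have "successively ltp S" by (simp add: vS_def successively_if_sorted_wrt)
  then have "successively (\<lambda>p q. snd p + 2 < fst q) S"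
    by (rule successively_mono) (use v in \<open>auto simp: vS_def ltp_def\<close>)
  then show ?thesis using v by (simp add: vS_def)
qed

lemma transp_ltp: "transp ltp"
  unfolding transp_def ltp_def by auto

lemma runs_ok: "vS 0 0 N S \<Longrightarrow> decreasing_runs (W S) (map runpq S)"
proof -
  assume v: "vS 0 0 N S"
  have e: "\<forall>p\<in>set S. snd p + 2 \<le> fst p" and s: "sorted_wrt ltp S" using v by (auto simp: vS_def)
  have r1: "\<forall>r\<in>set (map runpq S). r \<noteq> [] \<and> sorted_wrt (>) r"
    using e by (auto simp: runpq_def sorted_wrt_rev)
  have r2: "\<not> last (map runpq S ! i) > hd (map runpq S ! Suc i)" if "Suc i < length (map runpq S)" for i
  proof -
    have l: "Suc i < length S" using that by simp
    have lt: "ltp (S ! i) (S ! Suc i)" using sorted_wrt_nth_less[OF s _ l] by simp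
    have e1: "snd (S ! i) + 2 \<le> fst (S ! i)" "snd (S ! Suc i) + 2 \<le> fst (S ! Suc i)"
      using e l by auto
    have "last (runpq (S ! i)) = Suc (snd (S ! i))" using e1 by (simp add: runpq_def last_rev)
    moreover have "hd (runpq (S ! Suc i)) = fst (S ! Suc i) - 1" using e1 by (simp add: runpq_def hd_rev)
    ultimately show ?thesis using l lt e1 by (simp add: ltp_def) linarith
  qed
  show ?thesis unfolding decreasing_runs_def using r1 r2 by (simp add: W_def)
qed

theorem theorem4p1:
  fixes n :: nat
  shows "bij_betw Phi {D. dyck_path (n + 1) D} {w. nTL_monomial TYPE('k::field) n w}
         \<and> (\<forall>D. dyck_path (n + 1) D \<longrightarrow> decreasing_runs (Phi D) (Phi_runs D))"
proof (intro conjI allI impI)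
  show "decreasing_runs (Phi D) (Phi_runs D)" if "dyck_path (n + 1) D" for D
    using runs_ok[OF vS_pk[OF that]] by (simp add: Phi_W Phi_runs_pk)
next
  have inj: "inj_on Phi {D. dyck_path (n + 1) D}"
  proof (rule inj_onI)
    fix D1 D2 assume d1: "D1 \<in> {D. dyck_path (n + 1) D}" and d2: "D2 \<in> {D. dyck_path (n + 1) D}"
      and eq: "Phi D1 = Phi D2"
    have dd1: "dyck_path (n + 1) D1" using d1 by simp
    have dd2: "dyck_path (n + 1) D2" using d2 by simp
    have v1: "vS 0 0 (Suc n) (pk 0 0 D1)" by (rule vS_pk[OF dd1])
    have v2: "vS 0 0 (Suc n) (pk 0 0 D2)" by (rule vS_pk[OF dd2])
    note c1 = vS_chain[OF v1] and c2 = vS_chain[OF v2]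
    have "dec (W (pk 0 0 D1)) = pk 0 0 D1" by (rule dec_W[OF conjunct2[OF c1] conjunct1[OF c1]])
    moreover have "dec (W (pk 0 0 D2)) = pk 0 0 D2" by (rule dec_W[OF conjunct2[OF c2] conjunct1[OF c2]])
    moreover have "W (pk 0 0 D1) = W (pk 0 0 D2)" using eq by (simp only: Phi_W)
    ultimately have pe: "pk 0 0 D1 = pk 0 0 D2" by metis
    have a1: "length D1 = 2 * (n + 1) \<and> ups D1 = n + 1 \<and> downs D1 = n + 1 \<and> nnr 0 0 D1"
      using dd1 dyck_iff by blast
    have a2: "length D2 = 2 * (n + 1) \<and> ups D2 = n + 1 \<and> downs D2 = n + 1 \<and> nnr 0 0 D2"
      using dd2 dyck_iff by blast
    show "D1 = D2"
      by (rule pk_inj[of 0 0 D1 D2]) (use a1 a2 pe in simp_all)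
  qed
  have sub: "Phi ` {D. dyck_path (n + 1) D} \<subseteq> {w. nTL_monomial TYPE('k) n w}"
  proof
    fix w assume "w \<in> Phi ` {D. dyck_path (n + 1) D}"
    then obtain D where d: "dyck_path (n + 1) D" and w: "w = Phi D" by blast
    show "w \<in> {w. nTL_monomial TYPE('k) n w}" using monomial_W[OF vS_pk[OF d]] w by (simp add: Phi_W)
  qed
  have sup: "{w. nTL_monomial TYPE('k) n w} \<subseteq> Phi ` {D. dyck_path (n + 1) D}"
  proof
    fix w assume "w \<in> {w. nTL_monomial TYPE('k) n w}"
    then have m: "nTL_monomial TYPE('k) n w" by simp
    have iw: "is_word n w" using m by (simp add: nTL_monomial_def)
    have pos: "\<forall>x\<in>set w. 1 \<le> x" using iw by (auto simp: is_word_def)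
    have sw: "successively (\<lambda>x y. y + 1 = x \<or> x < y) w"
      by (rule succ_from_adj) (rule mono_adj[OF m], simp)
    define S where "S = dec w"
    have WS: "W S = w" and e: "\<forall>p\<in>set S. snd p + 2 \<le> fst p"
      and ch: "successively (\<lambda>p q. snd p + 2 < fst q) S"
      using W_dec[OF pos sw] by (simp_all add: S_def)
    have "successively ltp S"
    proof (rule succ_from_adj)
      fix xs a b ys assume S: "S = xs @ a # b # ys"
      have wa: "w = W xs @ runpq (fst a, snd a) @ runpq (fst b, snd b) @ W ys"
        using WS S by (simp add: W_append)
      have "snd a + 2 < fst b" using ch S by (simp add: successively_append_iff)
      moreover have "snd a + 2 \<le> fst a" "snd b + 2 \<le> fst b" using e S by auto
      ultimately have "fst a < fst b \<and> snd a < snd b" using strict_adj[OF m wa] by blast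
      then show "ltp a b" by (simp add: ltp_def)
    qed
    then have so: "sorted_wrt ltp S" using successively_conv_sorted_wrt[OF transp_ltp] by simp
    have bd: "fst p \<le> Suc n" if "p \<in> set S" for p
    proof -
      have "fst p - 1 \<in> set (runpq p)" using e that by (auto simp: runpq_def)
      moreover have "set (runpq p) \<subseteq> set w" using that WS by (auto simp: W_def)
      ultimately have "fst p - 1 \<le> n" using iw by (auto simp: is_word_def)
      then show ?thesis by simp
    qed
    have v: "vS 0 0 (Suc n) S" using so e bd by (auto simp: vS_def)
    define D where "D = psi 0 0 S (Suc n)"
    have P: "pk 0 0 D = S \<and> nnr 0 0 D \<and> ups D = Suc n \<and> downs D = Suc n"
      using psi_props[OF _ _ v] by (simp add: D_def)
    have "length D = 2 * (n + 1)" using P ups_downs_len[of D] by simp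
    then have "dyck_path (n + 1) D" using P by (simp add: dyck_iff)
    moreover have "Phi D = w" using P WS by (simp add: Phi_W)
    ultimately show "w \<in> Phi ` {D. dyck_path (n + 1) D}" by blast
  qed
  show "bij_betw Phi {D. dyck_path (n + 1) D} {w. nTL_monomial TYPE('k) n w}"
    unfolding bij_betw_def using inj sub sup by blast
qed


end
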